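(* Let $c\ge2$ and let $\mathcal{D}$ be a domain. Then the measure $\mathsf{FKIs}_{\mathcal{D}^\circ,c}$ on $\{0,1\}^{E(\mathcal{D}^\circ)}$ satisfies the FKG lattice condition, and hence is positively associated.
   Context: Weights $a=b=1$. Faces of $\mathbb{Z}^2$ are centered at integer points; the face $(i,j)$ is even if $i+j$ is even, odd otherwise. A domain $\mathcal{D}$ is a finite subgraph of $\mathbb{Z}^2$ consisting of a simple cycle $\partial\mathcal{D}$ with everything it encloses. An ice-rule spin configuration is $\sigma\colon F(\mathbb{Z}^2)\to\{\pm1\}$ such that around every vertex at least one diagonal pair of faces has equal spins; a vertex is of type $c$ if both diagonal pairs agree. $\mathsf{Spin}_{\mathcal{D},c}^{++}$ is the measure on ice-rule configurations equal to $+1$ on all faces outside $\mathcal{D}$, proportional to $c^{N_c}$ with $N_c$ the number of type-$c$ vertices of $\mathcal{D}$. A corner of $\mathcal{D}$ is a pair $(u,z)$ with $u$ a face outside $\mathcal{D}$ sharing an edge with a face of $\mathcal{D}$ and $z$ a vertex of $\partial\mathcal{D}$ on $u$. $\mathcal{D}^\bullet$ is the graph on even faces of $\mathcal{D}$ and even corners with edges between even faces of $\mathcal{D}$ sharing a vertex, between a corner $(u,z)$ and an even face $v\ni z$ of $\mathcal{D}$, and between corners $(u,z),(v,z)$, after identifying corners $(u,z),(u,z')$ when $zz'$ is an edge of $\mathcal{D}$; $\mathcal{D}^\circ$ is defined likewise with odd faces and corners. Edges of both are in bijection with vertices of $\mathcal{D}$; $e\in E(\mathcal{D}^\circ)$ and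 $e^*\in E(\mathcal{D}^\bullet)$ denote dual edges. Spins extend to corners by $\sigma(u,z)=\sigma(u)$. $\theta(\sigma^\circ)$ is the set of edges of $\mathcal{D}^\circ$ whose endpoints have different spins; $\omega(\sigma^\bullet)$ is the set of edges $e$ of $\mathcal{D}^\circ$ whose dual $e^*$ has endpoints with different spins. Given $\sigma$, $\xi\in\{0,1\}^{E(\mathcal{D}^\circ)}$ is defined by: $\xi(e)=0$ on $\theta(\sigma^\circ)$, $\xi(e)=1$ on $\omega(\sigma^\bullet)$, otherwise independently $\xi(e)=1$ with probability $(c-1)/c$. $\mathsf{FKIs}_{\mathcal{D}^\circ,c}$ is the law of $\xi$ when $\sigma\sim\mathsf{Spin}_{\mathcal{D},c}^{++}$. The FKG lattice condition for $\mu$ on $\{0,1\}^{E}$ with the pointwise order is $\mu(\xi\vee\xi')\mu(\xi\wedge\xi')\ge\mu(\xi)\mu(\xi')$. *)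

theory Defs
  imports Complex_Main
begin

text \<open>Faces of Z^2 are indexed by their centres (i,j) :: int * int.
  A vertex of Z^2 is indexed by (a,b) :: int * int and stands for the point
  (a+1/2, b+1/2); its four surrounding faces are (a,b),(a+1,b),(a,b+1),(a+1,b+1).\<close>

type_synonym face = "int \<times> int"
type_synonym vertex = "int \<times> int"

definition even_face :: "face \<Rightarrow> bool" where
  "even_face f = even (fst f + snd f)"

definition lattice_adj :: "vertex \<Rightarrow> vertex \<Rightarrow> bool" where
  "lattice_adj v w = (\<bar>fst v - fst w\<bar> + \<bar>snd v - snd w\<bar> = 1)"

definition faces_around :: "vertex \<Rightarrow> face set" where
  "faces_around v = {(fst v, snd v), (fst v + 1, snd v), (fst v, snd v + 1), (fst v + 1, snd v + 1)}"

definition diag1 :: "vertex \<Rightarrow> face \<times> face" where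
  "diag1 v = ((fst v, snd v), (fst v + 1, snd v + 1))"
definition diag2 :: "vertex \<Rightarrow> face \<times> face" where
  "diag2 v = ((fst v + 1, snd v), (fst v, snd v + 1))"

definition odd_pair :: "vertex \<Rightarrow> face \<times> face" where
  "odd_pair v = (if even (fst v + snd v) then diag2 v else diag1 v)"
definition even_pair :: "vertex \<Rightarrow> face \<times> face" where
  "even_pair v = (if even (fst v + snd v) then diag1 v else diag2 v)"

definition simple_cycle :: "vertex list \<Rightarrow> bool" where
  "simple_cycle cs \<longleftrightarrow> distinct cs \<and> length cs \<ge> 3 \<and>
     (\<forall>i < length cs. lattice_adj (cs ! i) (cs ! ((i + 1) mod length cs)))"

definition cycle_edge :: "vertex list \<Rightarrow> vertex \<Rightarrow> vertex \<Rightarrow> bool" where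
  "cycle_edge cs v w \<longleftrightarrow>
     (\<exists>i < length cs. {cs ! i, cs ! ((i + 1) mod length cs)} = {v, w})"

text \<open>A face (i,j) is enclosed by the cycle iff the horizontal ray from its centre
  to the right crosses the cycle an odd number of times; the ray crosses exactly the
  vertical cycle edges joining (a,j-1) and (a,j) with a >= i.\<close>
definition enclosed_face :: "vertex list \<Rightarrow> face \<Rightarrow> bool" where
  "enclosed_face cs f \<longleftrightarrow>
     odd (card {a. a \<ge> fst f \<and> cycle_edge cs (a, snd f - 1) (a, snd f)})"

definition D_faces :: "vertex list \<Rightarrow> face set" where
  "D_faces cs = {f. enclosed_face cs f}"

definition D_verts :: "vertex list \<Rightarrow> vertex set" where
  "D_verts cs = set cs \<union> {v. faces_around v \<subseteq> D_faces cs}"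

definition bdry_verts :: "vertex list \<Rightarrow> vertex set" where
  "bdry_verts cs = set cs"

section \<open>Spin configurations (True = +1, False = -1)\<close>

definition ice_rule_at :: "(face \<Rightarrow> bool) \<Rightarrow> vertex \<Rightarrow> bool" where
  "ice_rule_at \<sigma> v \<longleftrightarrow> \<sigma> (fst (diag1 v)) = \<sigma> (snd (diag1 v)) \<or> \<sigma> (fst (diag2 v)) = \<sigma> (snd (diag2 v))"

definition type_c_at :: "(face \<Rightarrow> bool) \<Rightarrow> vertex \<Rightarrow> bool" where
  "type_c_at \<sigma> v \<longleftrightarrow> \<sigma> (fst (diag1 v)) = \<sigma> (snd (diag1 v)) \<and> \<sigma> (fst (diag2 v)) = \<sigma> (snd (diag2 v))"

definition spin_configs :: "vertex list \<Rightarrow> (face \<Rightarrow> bool) set" where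
  "spin_configs cs = {\<sigma>. (\<forall>f. f \<notin> D_faces cs \<longrightarrow> \<sigma> f) \<and> (\<forall>v. ice_rule_at \<sigma> v)}"

definition N_c :: "vertex list \<Rightarrow> (face \<Rightarrow> bool) \<Rightarrow> nat" where
  "N_c cs \<sigma> = card {v \<in> D_verts cs. type_c_at \<sigma> v}"

definition spin_weight :: "vertex list \<Rightarrow> real \<Rightarrow> (face \<Rightarrow> bool) \<Rightarrow> real" where
  "spin_weight cs c \<sigma> = c ^ N_c cs \<sigma>"

definition spin_prob :: "vertex list \<Rightarrow> real \<Rightarrow> (face \<Rightarrow> bool) \<Rightarrow> real" where
  "spin_prob cs c \<sigma> =
     (if \<sigma> \<in> spin_configs cs
      then spin_weight cs c \<sigma> / (\<Sum>\<tau>\<in>spin_configs cs. spin_weight cs c \<tau>) else 0)"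

definition face_edge_adj :: "face \<Rightarrow> face \<Rightarrow> bool" where
  "face_edge_adj f g = (\<bar>fst f - fst g\<bar> + \<bar>snd f - snd g\<bar> = 1)"

definition is_corner :: "vertex list \<Rightarrow> face \<Rightarrow> vertex \<Rightarrow> bool" where
  "is_corner cs u z \<longleftrightarrow> u \<notin> D_faces cs \<and> (\<exists>f \<in> D_faces cs. face_edge_adj u f)
     \<and> z \<in> bdry_verts cs \<and> u \<in> faces_around z"

text \<open>Nodes of D-circ / D-bullet: a face of D, or (a representative of the
  identification class of) a corner (u,z).\<close>
datatype node = FaceNode face | CornerNode face vertex

definition node_of :: "vertex list \<Rightarrow> vertex \<Rightarrow> face \<Rightarrow> node" where
  "node_of cs z f = (if f \<in> D_faces cs then FaceNode f else CornerNode f z)"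

text \<open>Edges of D-circ (and their duals in D-bullet) are indexed by the vertices z of D;
  the edge at z joins the two odd (resp. even) faces/corners around z.\<close>
definition circ_ends :: "vertex list \<Rightarrow> vertex \<Rightarrow> node \<times> node" where
  "circ_ends cs z = (node_of cs z (fst (odd_pair z)), node_of cs z (snd (odd_pair z)))"

definition bullet_ends :: "vertex list \<Rightarrow> vertex \<Rightarrow> node \<times> node" where
  "bullet_ends cs z = (node_of cs z (fst (even_pair z)), node_of cs z (snd (even_pair z)))"

fun node_spin :: "(face \<Rightarrow> bool) \<Rightarrow> node \<Rightarrow> bool" where
  "node_spin \<sigma> (FaceNode f) = \<sigma> f"
| "node_spin \<sigma> (CornerNode u z) = \<sigma> u"

definition theta :: "vertex list \<Rightarrow> (face \<Rightarrow> bool) \<Rightarrow> vertex set" where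
  "theta cs \<sigma> = {z \<in> D_verts cs. node_spin \<sigma> (fst (circ_ends cs z)) \<noteq> node_spin \<sigma> (snd (circ_ends cs z))}"

definition omega :: "vertex list \<Rightarrow> (face \<Rightarrow> bool) \<Rightarrow> vertex set" where
  "omega cs \<sigma> = {z \<in> D_verts cs. node_spin \<sigma> (fst (bullet_ends cs z)) \<noteq> node_spin \<sigma> (snd (bullet_ends cs z))}"

text \<open>A configuration xi in {0,1}^E(D-circ) is represented by the set of edges
  (i.e. vertices of D) where xi = 1.  Conditional law of xi given sigma.\<close>
definition xi_cond :: "vertex list \<Rightarrow> real \<Rightarrow> (face \<Rightarrow> bool) \<Rightarrow> vertex set \<Rightarrow> real" where
  "xi_cond cs c \<sigma> \<xi> =
     (let F = D_verts cs - theta cs \<sigma> - omega cs \<sigma>; p = (c - 1) / c in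
      if \<xi> \<subseteq> D_verts cs \<and> \<xi> \<inter> theta cs \<sigma> = {} \<and> omega cs \<sigma> \<subseteq> \<xi>
      then p ^ card (\<xi> \<inter> F) * (1 - p) ^ card (F - \<xi>) else 0)"

definition FKIs :: "vertex list \<Rightarrow> real \<Rightarrow> vertex set \<Rightarrow> real" where
  "FKIs cs c \<xi> = (\<Sum>\<sigma>\<in>spin_configs cs. spin_prob cs c \<sigma> * xi_cond cs c \<sigma> \<xi>)"

definition fkg_lattice :: "'e set \<Rightarrow> ('e set \<Rightarrow> real) \<Rightarrow> bool" where
  "fkg_lattice E \<mu> \<longleftrightarrow>
     (\<forall>\<xi> \<xi>'. \<xi> \<subseteq> E \<longrightarrow> \<xi>' \<subseteq> E \<longrightarrow> \<mu> (\<xi> \<union> \<xi>') * \<mu> (\<xi> \<inter> \<xi>') \<ge> \<mu> \<xi> * \<mu> \<xi>')"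

definition positively_associated :: "'e set \<Rightarrow> ('e set \<Rightarrow> real) \<Rightarrow> bool" where
  "positively_associated E \<mu> \<longleftrightarrow>
     (\<forall>f g :: 'e set \<Rightarrow> real. mono_on (Pow E) f \<longrightarrow> mono_on (Pow E) g \<longrightarrow>
        (\<Sum>\<xi>\<in>Pow E. f \<xi> * g \<xi> * \<mu> \<xi>) \<ge> (\<Sum>\<xi>\<in>Pow E. f \<xi> * \<mu> \<xi>) * (\<Sum>\<xi>\<in>Pow E. g \<xi> * \<mu> \<xi>))"

end

theory Submission
  imports Defs
begin

lemma four_num:
  fixes a0 a1 b0 b1 c0 c1 d0 d1 :: real
  assumes nn: "0 \<le> a0" "0 \<le> a1" "0 \<le> b0" "0 \<le> b1" "0 \<le> c0" "0 \<le> c1" "0 \<le> d0" "0 \<le> d1"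
  and h00: "a0*b0 \<le> c0*d0" and h01: "a0*b1 \<le> c1*d0" and h10: "a1*b0 \<le> c1*d0" and h11: "a1*b1 \<le> c1*d1"
  shows "(a0+a1)*(b0+b1) \<le> (c0+c1)*(d0+d1)"
proof (cases "c1*d0 = 0")
  case True
  have "a0*b1 \<le> 0" "a1*b0 \<le> 0" using h01 h10 True by auto
  moreover have "0 \<le> a0*b1" "0 \<le> a1*b0" using nn by auto
  ultimately have "a0*b1 = 0" "a1*b0 = 0" by linarith+
  moreover have "0 \<le> c0*d1" "0 \<le> c1*d0" using nn by auto
  ultimately show ?thesis using h00 h11 by (simp add: distrib_left distrib_right del: mult_eq_0_iff)
next
  case False
  then have c1: "c1 > 0" and d0: "d0 > 0" using nn by (auto simp: less_le)
  define X where "X = c1*d0"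
  have X: "X > 0" using c1 d0 by (simp add: X_def)
  have e1: "c0 \<ge> a0*b0/d0" using h00 d0 by (simp add: field_simps)
  have e2: "d1 \<ge> a1*b1/c1" using h11 c1 by (simp add: field_simps mult.commute)
  have "(c0+c1)*(d0+d1) \<ge> (a0*b0/d0 + c1)*(d0 + a1*b1/c1)"
    by (rule mult_mono) (use e1 e2 nn c1 d0 in auto)
  also have "(a0*b0/d0 + c1)*(d0 + a1*b1/c1) = a0*b0 + a1*b1 + X + (a0*b1)*(a1*b0)/X"
    using c1 d0 by (simp add: X_def field_simps)
  finally have A: "(c0+c1)*(d0+d1) \<ge> a0*b0 + a1*b1 + X + (a0*b1)*(a1*b0)/X" .
  have "0 \<le> (X - a0*b1)*(X - a1*b0)" using h01 h10 by (simp add: X_def)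
  hence "X*(a0*b1 + a1*b0) \<le> X*X + (a0*b1)*(a1*b0)" by (simp add: algebra_simps)
  hence "a0*b1 + a1*b0 \<le> X + (a0*b1)*(a1*b0)/X" using X by (simp add: field_simps)
  with A show ?thesis by (simp add: algebra_simps)
qed

lemma sum_Pow_insert:
  assumes "finite N" "x \<notin> N"
  shows "(\<Sum>A\<in>Pow (insert x N). f A) = (\<Sum>A\<in>Pow N. f A + f (insert x A))"
proof -
  have inj: "inj_on (insert x) (Pow N)" using assms(2) by (auto simp: inj_on_def)
  have dis: "Pow N \<inter> insert x ` Pow N = {}" using assms(2) by auto
  have "(\<Sum>A\<in>Pow (insert x N). f A) = (\<Sum>A\<in>Pow N. f A) + (\<Sum>A\<in>insert x ` Pow N. f A)"
    unfolding Pow_insert using assms(1) dis by (simp add: sum.union_disjoint)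
  also have "(\<Sum>A\<in>insert x ` Pow N. f A) = (\<Sum>A\<in>Pow N. f (insert x A))"
    using inj by (simp add: sum.reindex)
  finally show ?thesis by (simp add: sum.distrib)
qed

lemma AD:
  fixes \<alpha> \<beta> \<gamma> \<delta> :: "'a set \<Rightarrow> real"
  assumes "finite N"
  and "\<And>A. A \<subseteq> N \<Longrightarrow> 0 \<le> \<alpha> A" "\<And>A. A \<subseteq> N \<Longrightarrow> 0 \<le> \<beta> A"
      "\<And>A. A \<subseteq> N \<Longrightarrow> 0 \<le> \<gamma> A" "\<And>A. A \<subseteq> N \<Longrightarrow> 0 \<le> \<delta> A"
  and "\<And>A B. A \<subseteq> N \<Longrightarrow> B \<subseteq> N \<Longrightarrow> \<alpha> A * \<beta> B \<le> \<gamma> (A \<union> B) * \<delta> (A \<inter> B)"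
  shows "(\<Sum>A\<in>Pow N. \<alpha> A) * (\<Sum>A\<in>Pow N. \<beta> A) \<le> (\<Sum>A\<in>Pow N. \<gamma> A) * (\<Sum>A\<in>Pow N. \<delta> A)"
  using assms
proof (induction N arbitrary: \<alpha> \<beta> \<gamma> \<delta> rule: finite_induct)
  case empty
  then show ?case by simp
next
  case (insert x N)
  let ?a = "\<lambda>A. \<alpha> A + \<alpha> (insert x A)"
  let ?b = "\<lambda>A. \<beta> A + \<beta> (insert x A)"
  let ?c = "\<lambda>A. \<gamma> A + \<gamma> (insert x A)"
  let ?d = "\<lambda>A. \<delta> A + \<delta> (insert x A)"
  have "(\<Sum>A\<in>Pow N. ?a A) * (\<Sum>A\<in>Pow N. ?b A) \<le> (\<Sum>A\<in>Pow N. ?c A) * (\<Sum>A\<in>Pow N. ?d A)"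
  proof (rule insert.IH)
    fix A assume "A \<subseteq> N"
    then show "0 \<le> ?a A" "0 \<le> ?b A" "0 \<le> ?c A" "0 \<le> ?d A"
    proof -
      have s1: "A \<subseteq> insert x N" "insert x A \<subseteq> insert x N" using \<open>A \<subseteq> N\<close> by auto
      show "0 \<le> ?a A" "0 \<le> ?b A" "0 \<le> ?c A" "0 \<le> ?d A"
        using insert.prems(1-4)[OF s1(1)] insert.prems(1-4)[OF s1(2)] by auto
    qed
  next
    fix A B assume A: "A \<subseteq> N" and B: "B \<subseteq> N"
    have xA: "x \<notin> A" "x \<notin> B" using A B insert.hyps by auto
    show "?a A * ?b B \<le> ?c (A \<union> B) * ?d (A \<inter> B)"
    proof (rule four_num)
      show "\<alpha> A * \<beta> B \<le> \<gamma> (A \<union> B) * \<delta> (A \<inter> B)" by (rule insert.prems(5)) (use A B in auto)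
      have "\<alpha> A * \<beta> (insert x B) \<le> \<gamma> (A \<union> insert x B) * \<delta> (A \<inter> insert x B)"
        by (rule insert.prems(5)) (use A B in auto)
      moreover have "A \<union> insert x B = insert x (A \<union> B)" "A \<inter> insert x B = A \<inter> B" using xA by auto
      ultimately show "\<alpha> A * \<beta> (insert x B) \<le> \<gamma> (insert x (A \<union> B)) * \<delta> (A \<inter> B)" by simp
      have "\<alpha> (insert x A) * \<beta> B \<le> \<gamma> (insert x A \<union> B) * \<delta> (insert x A \<inter> B)"
        by (rule insert.prems(5)) (use A B in auto)
      moreover have "insert x A \<union> B = insert x (A \<union> B)" "insert x A \<inter> B = A \<inter> B" using xA by auto
      ultimately show "\<alpha> (insert x A) * \<beta> B \<le> \<gamma> (insert x (A \<union> B)) * \<delta> (A \<inter> B)" by simp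
      have "\<alpha> (insert x A) * \<beta> (insert x B) \<le> \<gamma> (insert x A \<union> insert x B) * \<delta> (insert x A \<inter> insert x B)"
        by (rule insert.prems(5)) (use A B in auto)
      moreover have "insert x A \<union> insert x B = insert x (A \<union> B)" "insert x A \<inter> insert x B = insert x (A \<inter> B)" by auto
      ultimately show "\<alpha> (insert x A) * \<beta> (insert x B) \<le> \<gamma> (insert x (A \<union> B)) * \<delta> (insert x (A \<inter> B))" by simp
    next
      have s1: "A \<subseteq> insert x N" "insert x A \<subseteq> insert x N" "B \<subseteq> insert x N" "insert x B \<subseteq> insert x N"
        "A \<union> B \<subseteq> insert x N" "insert x (A \<union> B) \<subseteq> insert x N" "A \<inter> B \<subseteq> insert x N" "insert x (A \<inter> B) \<subseteq> insert x N"
        using A B by auto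
      show "0 \<le> \<alpha> A" "0 \<le> \<alpha> (insert x A)" "0 \<le> \<beta> B" "0 \<le> \<beta> (insert x B)"
        "0 \<le> \<gamma> (A \<union> B)" "0 \<le> \<gamma> (insert x (A \<union> B))" "0 \<le> \<delta> (A \<inter> B)" "0 \<le> \<delta> (insert x (A \<inter> B))"
        using insert.prems(1)[OF s1(1)] insert.prems(1)[OF s1(2)] insert.prems(2)[OF s1(3)] insert.prems(2)[OF s1(4)]
          insert.prems(3)[OF s1(5)] insert.prems(3)[OF s1(6)] insert.prems(4)[OF s1(7)] insert.prems(4)[OF s1(8)] by auto
    qed
  qed
  then show ?case using insert.hyps by (simp add: sum_Pow_insert)
qed

lemma binom_Pow:
  fixes a b :: real
  assumes "finite F"
  shows "(\<Sum>B\<in>Pow F. a ^ card B * b ^ card (F - B)) = (a + b) ^ card F"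
  using assms
proof (induction F rule: finite_induct)
  case empty then show ?case by simp
next
  case (insert x F)
  have "(\<Sum>B\<in>Pow (insert x F). a ^ card B * b ^ card (insert x F - B))
      = (\<Sum>B\<in>Pow F. a ^ card B * b ^ card (insert x F - B) + a ^ card (insert x B) * b ^ card (insert x F - insert x B))"
    using insert by (simp add: sum_Pow_insert)
  also have "\<dots> = (\<Sum>B\<in>Pow F. (a + b) * (a ^ card B * b ^ card (F - B)))"
  proof (rule sum.cong)
    fix B assume B: "B \<in> Pow F"
    have fB: "finite B" using B insert.hyps(1) finite_subset by auto
    have 1: "insert x F - B = insert x (F - B)" using B insert.hyps by auto
    have 2: "insert x F - insert x B = F - B" using B insert.hyps by auto
    have "x \<notin> B" using B insert.hyps by auto
    hence 3: "card (insert x B) = Suc (card B)" using fB by simp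
    have 4: "card (insert x (F - B)) = Suc (card (F - B))" using insert.hyps by auto
    show "a ^ card B * b ^ card (insert x F - B) + a ^ card (insert x B) * b ^ card (insert x F - insert x B)
        = (a + b) * (a ^ card B * b ^ card (F - B))"
      unfolding 1 2 3 4 by (simp add: algebra_simps)
  qed simp
  also have "\<dots> = (a+b) ^ card (insert x F)" using insert by (simp add: sum_distrib_left[symmetric])
  finally show ?case .
qed


definition mx :: "('a \<Rightarrow> bool) \<Rightarrow> ('a \<Rightarrow> bool) \<Rightarrow> ('a \<Rightarrow> bool)" where
  "mx s t = (\<lambda>x. s x = t x)"

lemma mx_simps: "mx (mx a b) b = a" "mx a (mx a b) = b" "mx a b = mx b a"
  "mx (mx a b) (mx c d) = mx (mx a c) (mx b d)"
  by (auto simp: mx_def fun_eq_iff)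

lemma card_fibres:
  assumes "finite A"
  shows "card A = (\<Sum>b\<in>f ` A. card {a\<in>A. f a = b})"
proof -
  have "A = (\<Union>b\<in>f ` A. {a\<in>A. f a = b})" by auto
  hence "card A = card (\<Union>b\<in>f ` A. {a\<in>A. f a = b})" by simp
  also have "\<dots> = (\<Sum>b\<in>f ` A. card {a\<in>A. f a = b})"
    by (rule card_UN_disjoint) (use assms in auto)
  finally show ?thesis .
qed

lemma grp_card:
  assumes fH: "finite H" and fK: "finite K"
    and cH: "\<And>s t. s \<in> H \<Longrightarrow> t \<in> H \<Longrightarrow> mx s t \<in> H"
    and cK: "\<And>s t. s \<in> K \<Longrightarrow> t \<in> K \<Longrightarrow> mx s t \<in> K"
  shows "card H * card K = card (H \<inter> K) * card ((\<lambda>p. mx (fst p) (snd p)) ` (H \<times> K))"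
proof -
  let ?f = "\<lambda>p. mx (fst p) (snd p)"
  have "card H * card K = card (H \<times> K)" by (simp add: card_cartesian_product)
  also have "\<dots> = (\<Sum>r\<in>?f ` (H \<times> K). card {p\<in>H \<times> K. ?f p = r})"
    by (rule card_fibres) (use fH fK in auto)
  also have "\<dots> = (\<Sum>r\<in>?f ` (H \<times> K). card (H \<inter> K))"
  proof (rule sum.cong[OF refl])
    fix r assume "r \<in> ?f ` (H \<times> K)"
    then obtain s0 t0 where s0: "s0 \<in> H" and t0: "t0 \<in> K" and r: "r = mx s0 t0" by auto
    have "bij_betw (\<lambda>p. mx (fst p) s0) {p\<in>H \<times> K. ?f p = r} (H \<inter> K)"
    proof (rule bij_betw_byWitness[where f' = "\<lambda>u. (mx u s0, mx u t0)"])
      show "\<forall>p\<in>{p\<in>H \<times> K. ?f p = r}. (mx (mx (fst p) s0) s0, mx (mx (fst p) s0) t0) = p"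
      proof
        fix p assume p: "p \<in> {p\<in>H \<times> K. ?f p = r}"
        obtain s t where pst: "p = (s,t)" by (cases p)
        have "mx s t = mx s0 t0" using p r pst by auto
        hence "mx (mx s s0) t0 = t" by (auto simp: mx_def fun_eq_iff)
        thus "(mx (mx (fst p) s0) s0, mx (mx (fst p) s0) t0) = p" using pst by (simp add: mx_simps)
      qed
      show "\<forall>u\<in>H \<inter> K. mx (fst (mx u s0, mx u t0)) s0 = u" by (auto simp: mx_def fun_eq_iff)
      show "(\<lambda>p. mx (fst p) s0) ` {p\<in>H \<times> K. ?f p = r} \<subseteq> H \<inter> K"
      proof
        fix u assume "u \<in> (\<lambda>p. mx (fst p) s0) ` {p\<in>H \<times> K. ?f p = r}"
        then obtain s t where st: "s \<in> H" "t \<in> K" "mx s t = r" and u: "u = mx s s0" by auto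
        have "u = mx t t0" using st(3) r u by (auto simp: mx_def fun_eq_iff)
        thus "u \<in> H \<inter> K" using cH[OF st(1) s0] cK[OF st(2) t0] u by auto
      qed
      show "(\<lambda>u. (mx u s0, mx u t0)) ` (H \<inter> K) \<subseteq> {p\<in>H \<times> K. ?f p = r}"
        using cH s0 cK t0 r by (auto simp: mx_def fun_eq_iff)
    qed
    thus "card {p\<in>H \<times> K. ?f p = r} = card (H \<inter> K)" by (rule bij_betw_same_card)
  qed
  also have "\<dots> = card (H \<inter> K) * card (?f ` (H \<times> K))" by simp
  finally show ?thesis .
qed

lemma grp_lsm:
  assumes fH: "finite H" and fK: "finite K"
    and cH: "\<And>s t. s \<in> H \<Longrightarrow> t \<in> H \<Longrightarrow> mx s t \<in> H"
    and cK: "\<And>s t. s \<in> K \<Longrightarrow> t \<in> K \<Longrightarrow> mx s t \<in> K"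
    and U: "U = H \<inter> K" and L: "(\<lambda>p. mx (fst p) (snd p)) ` (H \<times> K) \<subseteq> L" and fL: "finite L"
  shows "card H * card K \<le> card U * card L"
proof -
  have "card H * card K = card U * card ((\<lambda>p. mx (fst p) (snd p)) ` (H \<times> K))"
    using grp_card[OF fH fK cH cK] U by simp
  also have "\<dots> \<le> card U * card L" by (intro mult_le_mono2 card_mono[OF fL L])
  finally show ?thesis .
qed

lemma fkg_pos_assoc:
  fixes \<mu> :: "'e set \<Rightarrow> real"
  assumes fE: "finite E" and nn: "\<And>A. A \<subseteq> E \<Longrightarrow> 0 \<le> \<mu> A"
    and tot: "(\<Sum>A\<in>Pow E. \<mu> A) = 1" and fkg: "fkg_lattice E \<mu>"
  shows "positively_associated E \<mu>"
  unfolding positively_associated_def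
proof (intro allI impI)
  fix f g :: "'e set \<Rightarrow> real"
  assume mf: "mono_on (Pow E) f" and mg: "mono_on (Pow E) g"
  define f' where "f' A = f A - f {}" for A
  define g' where "g' A = g A - g {}" for A
  have f'm: "A \<subseteq> B \<Longrightarrow> B \<subseteq> E \<Longrightarrow> f' A \<le> f' B" for A B
    using mf unfolding f'_def mono_on_def by (metis Pow_iff diff_right_mono order_trans)
  have g'm: "A \<subseteq> B \<Longrightarrow> B \<subseteq> E \<Longrightarrow> g' A \<le> g' B" for A B
    using mg unfolding g'_def mono_on_def by (metis Pow_iff diff_right_mono order_trans)
  have f'0: "A \<subseteq> E \<Longrightarrow> 0 \<le> f' A" for A using f'm[of "{}" A] by (simp add: f'_def)
  have g'0: "A \<subseteq> E \<Longrightarrow> 0 \<le> g' A" for A using g'm[of "{}" A] by (simp add: g'_def)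
  have AD': "(\<Sum>A\<in>Pow E. f' A * \<mu> A) * (\<Sum>A\<in>Pow E. g' A * \<mu> A) \<le> (\<Sum>A\<in>Pow E. f' A * g' A * \<mu> A) * (\<Sum>A\<in>Pow E. \<mu> A)"
  proof (rule AD[OF fE])
    fix A B assume A: "A \<subseteq> E" and B: "B \<subseteq> E"
    have AB: "A \<union> B \<subseteq> E" "A \<inter> B \<subseteq> E" using A B by auto
    have 1: "\<mu> A * \<mu> B \<le> \<mu> (A \<union> B) * \<mu> (A \<inter> B)" using fkg A B unfolding fkg_lattice_def by auto
    have 2: "f' A * g' B \<le> f' (A \<union> B) * g' (A \<union> B)"
      by (rule mult_mono) (use f'm g'm A B AB f'0 g'0 in auto)
    have "f' A * \<mu> A * (g' B * \<mu> B) = (f' A * g' B) * (\<mu> A * \<mu> B)" by simp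
    also have "\<dots> \<le> (f' (A \<union> B) * g' (A \<union> B)) * (\<mu> (A \<union> B) * \<mu> (A \<inter> B))"
      by (rule mult_mono[OF 2 1]) (use f'0 g'0 nn AB in auto)
    finally show "f' A * \<mu> A * (g' B * \<mu> B) \<le> f' (A \<union> B) * g' (A \<union> B) * \<mu> (A \<union> B) * \<mu> (A \<inter> B)"
      by simp
  qed (use f'0 g'0 nn in auto)
  let ?S = "\<lambda>h. (\<Sum>A\<in>Pow E. h A * \<mu> A)"
  have e1: "?S f' = ?S f - f {}" unfolding f'_def
    by (simp add: left_diff_distrib sum_subtractf sum_distrib_left[symmetric] tot)
  have e2: "?S g' = ?S g - g {}" unfolding g'_def
    by (simp add: left_diff_distrib sum_subtractf sum_distrib_left[symmetric] tot)
  have e3: "(\<Sum>A\<in>Pow E. f' A * g' A * \<mu> A) = (\<Sum>A\<in>Pow E. f A * g A * \<mu> A) - g {} * ?S f - f {} * ?S g + f {} * g {}"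
  proof -
    have "(\<Sum>A\<in>Pow E. f' A * g' A * \<mu> A) = (\<Sum>A\<in>Pow E. f A*g A*\<mu> A - g {}*(f A*\<mu> A) - f {}*(g A*\<mu> A) + f {}*g {}*\<mu> A)"
      by (rule sum.cong) (auto simp: f'_def g'_def algebra_simps)
    also have "\<dots> = (\<Sum>A\<in>Pow E. f A * g A * \<mu> A) - g {} * ?S f - f {} * ?S g + f {} * g {} * (\<Sum>A\<in>Pow E. \<mu> A)"
      by (simp add: sum.distrib sum_subtractf sum_distrib_left)
    finally show ?thesis using tot by simp
  qed
  have "(?S f - f {}) * (?S g - g {}) \<le> (\<Sum>A\<in>Pow E. f A * g A * \<mu> A) - g {} * ?S f - f {} * ?S g + f {} * g {}"
    using AD' unfolding e1 e2 e3 tot by simp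
  thus "(\<Sum>A\<in>Pow E. f A * g A * \<mu> A) \<ge> ?S f * ?S g" by (simp add: algebra_simps)
qed


lemma cross_char:
  fixes v1 v2 w1 w2 i j :: int
  assumes "\<bar>v1-w1\<bar>+\<bar>v2-w2\<bar> = 1"
  shows "((v2=j \<and> v1\<ge>i) \<noteq> (w2=j \<and> w1\<ge>i)) \<longleftrightarrow>
    ((\<exists>a\<ge>i. {(v1,v2),(w1,w2)} = {(a,j-1),(a,j)}) \<or> (\<exists>a\<ge>i. {(v1,v2),(w1,w2)} = {(a,j),(a,j+1)})
     \<or> {(v1,v2),(w1,w2)} = {(i-1,j),(i,j)})"
proof
  assume h: "(v2=j \<and> v1\<ge>i) \<noteq> (w2=j \<and> w1\<ge>i)"
  show "((\<exists>a\<ge>i. {(v1,v2),(w1,w2)} = {(a,j-1),(a,j)}) \<or> (\<exists>a\<ge>i. {(v1,v2),(w1,w2)} = {(a,j),(a,j+1)})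
     \<or> {(v1,v2),(w1,w2)} = {(i-1,j),(i,j)})"
  proof (cases "v2=j \<and> v1\<ge>i")
    case True
    then have w: "\<not>(w2=j \<and> w1\<ge>i)" using h by auto
    have "(v1 = w1 \<and> w2 = j - 1) \<or> (v1 = w1 \<and> w2 = j+1) \<or> (w2 = j \<and> w1 = v1 - 1) \<or> (w2 = j \<and> w1 = v1+1)"
      using assms True by arith
    then consider "v1 = w1" "w2 = j - 1" | "v1 = w1" "w2 = j+1" | "w2 = j" "w1 = v1 - 1" | "w2 = j" "w1 = v1 + 1"
      by blast
    then show ?thesis
    proof cases
      case 1 then show ?thesis using True by (auto simp: doubleton_eq_iff)
    next
      case 2 then show ?thesis using True by (auto simp: doubleton_eq_iff)
    next
      case 3 then have "v1 = i" using w True by auto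
      then show ?thesis using 3 True by (auto simp: doubleton_eq_iff)
    next
      case 4 then show ?thesis using w True by auto
    qed
  next
    case False
    then have w: "w2=j \<and> w1\<ge>i" using h by auto
    have "(v1 = w1 \<and> v2 = j - 1) \<or> (v1 = w1 \<and> v2 = j+1) \<or> (v2 = j \<and> v1 = w1 - 1) \<or> (v2 = j \<and> v1 = w1+1)"
      using assms w by arith
    then consider "v1 = w1" "v2 = j - 1" | "v1 = w1" "v2 = j+1" | "v2 = j" "v1 = w1 - 1" | "v2 = j" "v1 = w1 + 1"
      by blast
    then show ?thesis
    proof cases
      case 1 then show ?thesis using w by (auto simp: doubleton_eq_iff)
    next
      case 2 then show ?thesis using w by (auto simp: doubleton_eq_iff)
    next
      case 3 then have "w1 = i" using w False by auto
      then show ?thesis using 3 w by (auto simp: doubleton_eq_iff)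
    next
      case 4 then show ?thesis using w False by auto
    qed
  qed
next
  assume "((\<exists>a\<ge>i. {(v1,v2),(w1,w2)} = {(a,j-1),(a,j)}) \<or> (\<exists>a\<ge>i. {(v1,v2),(w1,w2)} = {(a,j),(a,j+1)})
     \<or> {(v1,v2),(w1,w2)} = {(i-1,j),(i,j)})"
  then show "((v2=j \<and> v1\<ge>i) \<noteq> (w2=j \<and> w1\<ge>i))"
    by (auto simp: doubleton_eq_iff)
qed


context
  fixes cs :: "vertex list"
  assumes sc: "simple_cycle cs"
begin

abbreviation "nn \<equiv> length cs"
definition "nx k = cs ! ((k + 1) mod length cs)"

lemma n3: "nn \<ge> 3" and dist: "distinct cs" and adjc: "\<And>k. k < nn \<Longrightarrow> lattice_adj (cs!k) (nx k)"
  using sc unfolding simple_cycle_def nx_def by auto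

lemma cedge: "cycle_edge cs v w \<longleftrightarrow> (\<exists>k<nn. {cs!k, nx k} = {v,w})"
  unfolding cycle_edge_def nx_def by simp

lemma nx_lt: "k < nn \<Longrightarrow> (k+1) mod nn < nn"
proof -
  have "nn > 0" using n3 by linarith
  thus ?thesis by simp
qed

lemma cedge_mem: "cycle_edge cs v w \<Longrightarrow> v \<in> set cs \<and> w \<in> set cs"
proof -
  assume "cycle_edge cs v w"
  then obtain k where k: "k < nn" and e: "{cs!k, nx k} = {v,w}" unfolding cedge by blast
  have "cs!k \<in> set cs" "nx k \<in> set cs" using k nx_lt[OF k] unfolding nx_def by auto
  with e show ?thesis by (auto simp: doubleton_eq_iff)
qed

lemma step_unique:
  assumes k: "k < nn" and k': "k' < nn" and e: "{cs!k, nx k} = {cs!k', nx k'}"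
  shows "k = k'"
proof -
  have d: "\<And>a b. a < nn \<Longrightarrow> b < nn \<Longrightarrow> cs!a = cs!b \<Longrightarrow> a = b" using dist nth_eq_iff_index_eq by blast
  from e consider "cs!k = cs!k'" | "cs!k = nx k'" "nx k = cs!k'" by (auto simp: doubleton_eq_iff)
  then show ?thesis
  proof cases
    case 1 then show ?thesis using d k k' by blast
  next
    case 2
    have a: "k = (k'+1) mod nn" using d[OF k nx_lt[OF k']] 2(1) unfolding nx_def by blast
    have b: "k' = (k+1) mod nn" using d[OF nx_lt[OF k] k'] 2(2) unfolding nx_def by blast
    show ?thesis
    proof (cases "k' + 1 < nn")
      case True
      then have kk: "k = k'+1" using a by simp
      show ?thesis
      proof (cases "k'+2 < nn")
        case True
        then have "(k+1) mod nn = k'+2" using kk by simp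
        then show ?thesis using b by simp
      next
        case False
        then have "k+1 = nn" using kk \<open>k'+1 < nn\<close> by simp
        then have "k' = 0" using b by simp
        then show ?thesis using kk \<open>k+1 = nn\<close> n3 by simp
      qed
    next
      case False
      then have "k'+1 = nn" using k' by simp
      then have "k = 0" using a by simp
      then have "k' = 1 mod nn" using b by simp
      then have "k' = 1" using n3 by simp
      then show ?thesis using \<open>k'+1 = nn\<close> n3 by simp
    qed
  qed
qed

definition "crossV j i = {a. a \<ge> i \<and> cycle_edge cs (a, j-1) (a, j)}"

lemma enc_def': "enclosed_face cs (i,j) = odd (card (crossV j i))"
  unfolding enclosed_face_def crossV_def by simp

lemma fin_crossV: "finite (crossV j i)"
proof -
  have "crossV j i \<subseteq> fst ` set cs" unfolding crossV_def using cedge_mem by force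
  then show ?thesis using finite_subset by blast
qed

lemma G1: "enclosed_face cs (i,j) = (enclosed_face cs (i+1,j) \<noteq> cycle_edge cs (i,j-1) (i,j))"
proof -
  have "crossV j i = (if cycle_edge cs (i,j-1) (i,j) then insert i (crossV j (i+1)) else crossV j (i+1))"
    unfolding crossV_def
  proof (simp add: set_eq_iff, intro conjI impI allI)
    fix x assume "\<not> cycle_edge cs (i, j - 1) (i, j)"
    then show "(i \<le> x \<and> cycle_edge cs (x, j - 1) (x, j)) = (i + 1 \<le> x \<and> cycle_edge cs (x, j - 1) (x, j))"
      by (cases "x = i") auto
  qed auto
  moreover have "i \<notin> crossV j (i+1)" unfolding crossV_def by auto
  ultimately show ?thesis unfolding enc_def' using fin_crossV by auto
qed

definition "Kv j i = {k. k < nn \<and> (\<exists>a\<ge>i. {cs!k, nx k} = {(a,j-1),(a,j)})}"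
definition "Kh j i = {k. k < nn \<and> {cs!k, nx k} = {(i-1,j),(i,j)}}"
definition "Xs j i = {k. k < nn \<and> ((snd (cs!k) = j \<and> fst (cs!k) \<ge> i) \<noteq> (snd (nx k) = j \<and> fst (nx k) \<ge> i))}"

lemma card_Kv: "card (Kv j i) = card (crossV j i)"
proof (rule bij_betw_same_card[of "\<lambda>k. fst (cs!k)"], unfold bij_betw_def, intro conjI)
  show "inj_on (\<lambda>k. fst (cs ! k)) (Kv j i)"
  proof (rule inj_onI)
    fix k k' assume k: "k \<in> Kv j i" and k': "k' \<in> Kv j i" and f: "fst (cs!k) = fst (cs!k')"
    from k obtain a where a: "k < nn" "{cs!k, nx k} = {(a,j-1),(a,j)}" unfolding Kv_def by blast
    from k' obtain b where b: "k' < nn" "{cs!k', nx k'} = {(b,j-1),(b,j)}" unfolding Kv_def by blast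
    have "fst (cs!k) = a" using a(2) by (auto simp: doubleton_eq_iff)
    moreover have "fst (cs!k') = b" using b(2) by (auto simp: doubleton_eq_iff)
    ultimately have "a = b" using f by simp
    then show "k = k'" using step_unique[OF a(1) b(1)] a(2) b(2) by simp
  qed
  show "(\<lambda>k. fst (cs ! k)) ` Kv j i = crossV j i"
  proof
    show "(\<lambda>k. fst (cs ! k)) ` Kv j i \<subseteq> crossV j i"
    proof
      fix x assume "x \<in> (\<lambda>k. fst (cs ! k)) ` Kv j i"
      then obtain k a where k: "k < nn" "{cs!k, nx k} = {(a,j-1),(a,j)}" "a \<ge> i" and x: "x = fst (cs!k)"
        unfolding Kv_def by blast
      have "x = a" using k(2) x by (auto simp: doubleton_eq_iff)
      moreover have "cycle_edge cs (a,j-1) (a,j)" unfolding cedge using k by blast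
      ultimately show "x \<in> crossV j i" using k(3) unfolding crossV_def by simp
    qed
    show "crossV j i \<subseteq> (\<lambda>k. fst (cs ! k)) ` Kv j i"
    proof
      fix a assume "a \<in> crossV j i"
      then have ai: "a \<ge> i" and "cycle_edge cs (a,j-1) (a,j)" unfolding crossV_def by auto
      then obtain k where k: "k < nn" "{cs!k, nx k} = {(a,j-1),(a,j)}" unfolding cedge by blast
      have "fst (cs!k) = a" using k(2) by (auto simp: doubleton_eq_iff)
      moreover have "k \<in> Kv j i" unfolding Kv_def using k ai by blast
      ultimately show "a \<in> (\<lambda>k. fst (cs ! k)) ` Kv j i" by force
    qed
  qed
qed

lemma card_Kh: "card (Kh j i) = (if cycle_edge cs (i-1,j) (i,j) then 1 else 0)"
proof (cases "cycle_edge cs (i-1,j) (i,j)")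
  case True
  then obtain k where k: "k < nn" "{cs!k, nx k} = {(i-1,j),(i,j)}" unfolding cedge by blast
  have "Kh j i = {k}"
  proof
    show "Kh j i \<subseteq> {k}"
    proof
      fix k' assume "k' \<in> Kh j i"
      hence k': "k' < nn" "{cs!k', nx k'} = {(i-1,j),(i,j)}" unfolding Kh_def by auto
      show "k' \<in> {k}" using step_unique[OF k(1) k'(1)] k(2) k'(2) by simp
    qed
    show "{k} \<subseteq> Kh j i" using k unfolding Kh_def by auto
  qed
  then show ?thesis using True by simp
next
  case False
  then have "Kh j i = {}" unfolding Kh_def cedge by blast
  then show ?thesis using False by simp
qed

lemma Xs_eq: "Xs j i = Kv j i \<union> Kv (j+1) i \<union> Kh j i"
proof -
  have "k \<in> Xs j i \<longleftrightarrow> k \<in> Kv j i \<union> Kv (j+1) i \<union> Kh j i" for k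
  proof (cases "k < nn")
    case True
    obtain v1 v2 where v: "cs!k = (v1,v2)" by (cases "cs!k")
    obtain w1 w2 where w: "nx k = (w1,w2)" by (cases "nx k")
    have "\<bar>v1-w1\<bar>+\<bar>v2-w2\<bar> = 1" using adjc[OF True] v w unfolding lattice_adj_def by simp
    from cross_char[OF this, of j i] show ?thesis using True v w unfolding Xs_def Kv_def Kh_def by simp
  next
    case False then show ?thesis unfolding Xs_def Kv_def Kh_def by simp
  qed
  then show ?thesis by blast
qed

lemma Xs_even: "even (card (Xs j i))"
proof -
  define q where "q k = (if snd (cs!k) = j \<and> fst (cs!k) \<ge> i then 1 else 0 :: nat)" for k
  have n0: "nn > 0" using n3 by linarith
  have mq: "(x+1) mod nn = (if x+1 = nn then 0 else x+1)" if "x < nn" for x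
    using that by (cases "x+1 = nn") auto
  have inj: "inj_on (\<lambda>k. (k+1) mod nn) {..<nn}"
  proof (rule inj_onI)
    fix x y assume x: "x \<in> {..<nn}" and y: "y \<in> {..<nn}" and e: "(x+1) mod nn = (y+1) mod nn"
    have "x < nn" "y < nn" using x y by auto
    with e show "x = y" unfolding mq[OF \<open>x < nn\<close>] mq[OF \<open>y < nn\<close>] by (auto split: if_splits)
  qed
  have im: "(\<lambda>k. (k+1) mod nn) ` {..<nn} \<subseteq> {..<nn}" using n0 by auto
  have bij: "bij_betw (\<lambda>k. (k+1) mod nn) {..<nn} {..<nn}"
    unfolding bij_betw_def using inj endo_inj_surj[OF finite_lessThan im inj] by simp
  have s1: "(\<Sum>k<nn. q ((k+1) mod nn)) = (\<Sum>k<nn. q k)"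
    using sum.reindex_bij_betw[OF bij, of q] by simp
  have pt: "q k + q ((k+1) mod nn) = (if k \<in> Xs j i then 1 else 0) + 2 * (q k * q ((k+1) mod nn))" if "k < nn" for k
  proof -
    have "q ((k+1) mod nn) = (if snd (nx k) = j \<and> fst (nx k) \<ge> i then 1 else 0)"
      unfolding q_def nx_def by simp
    moreover have "k \<in> Xs j i \<longleftrightarrow> (snd (cs!k) = j \<and> fst (cs!k) \<ge> i) \<noteq> (snd (nx k) = j \<and> fst (nx k) \<ge> i)"
      unfolding Xs_def using that by simp
    ultimately show ?thesis unfolding q_def by (simp only: split: if_split) simp
  qed
  have "2 * (\<Sum>k<nn. q k) = (\<Sum>k<nn. q k + q ((k+1) mod nn))" using s1 by (simp add: sum.distrib)
  also have "\<dots> = (\<Sum>k<nn. (if k \<in> Xs j i then 1 else 0) + 2 * (q k * q ((k+1) mod nn)))"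
    by (rule sum.cong[OF refl]) (use pt in simp)
  also have "\<dots> = (\<Sum>k<nn. (if k \<in> Xs j i then 1 else 0)) + 2 * (\<Sum>k<nn. q k * q ((k+1) mod nn))"
    by (simp add: sum.distrib sum_distrib_left)
  also have "(\<Sum>k<nn. (if k \<in> Xs j i then (1::nat) else 0)) = card (Xs j i)"
  proof -
    have "Xs j i = {k \<in> {..<nn}. k \<in> Xs j i}" unfolding Xs_def by auto
    hence "card (Xs j i) = (\<Sum>k\<in>{k \<in> {..<nn}. k \<in> Xs j i}. 1)" by simp
    also have "\<dots> = (\<Sum>k<nn. (if k \<in> Xs j i then (1::nat) else 0))"
      by (rule sum.inter_filter) simp
    finally show ?thesis by simp
  qed
  finally have "2 * (\<Sum>k<nn. q k) = card (Xs j i) + 2 * (\<Sum>k<nn. q k * q ((k+1) mod nn))" .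
  hence "even (card (Xs j i) + 2 * (\<Sum>k<nn. q k * q ((k+1) mod nn)))" by (metis dvd_triv_left)
  thus ?thesis by simp
qed

lemma G2: "enclosed_face cs (i,j) = (enclosed_face cs (i,j+1) \<noteq> cycle_edge cs (i-1,j) (i,j))"
proof -
  have fin: "finite (Kv j i)" "finite (Kv (j+1) i)" "finite (Kh j i)" unfolding Kv_def Kh_def by auto
  have d1: "Kv j i \<inter> Kv (j+1) i = {}" unfolding Kv_def by (auto simp: doubleton_eq_iff)
  have d2: "(Kv j i \<union> Kv (j+1) i) \<inter> Kh j i = {}" unfolding Kv_def Kh_def by (auto simp: doubleton_eq_iff)
  have "card (Xs j i) = card (Kv j i) + card (Kv (j+1) i) + card (Kh j i)"
    unfolding Xs_eq using fin d1 d2 by (simp add: card_Un_disjoint)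
  then have "even (card (crossV j i) + card (crossV (j+1) i) + (if cycle_edge cs (i-1,j) (i,j) then 1 else 0))"
    using Xs_even[of j i] by (simp add: card_Kv card_Kh)
  moreover have "enclosed_face cs (i,j+1) = odd (card (crossV (j+1) i))" unfolding enc_def' by simp
  ultimately show ?thesis unfolding enc_def' by (auto split: if_splits)
qed

lemma enc_mem: "enclosed_face cs (i,j) \<Longrightarrow> \<exists>a\<ge>i. (a,j) \<in> set cs"
proof -
  assume "enclosed_face cs (i,j)"
  then have "crossV j i \<noteq> {}" unfolding enc_def' by (metis card.empty odd_one even_zero)
  then obtain a where "a \<ge> i" "cycle_edge cs (a,j-1) (a,j)" unfolding crossV_def by auto
  then show ?thesis using cedge_mem by blast
qed

lemma vert_out:
  assumes z: "z \<notin> set cs"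
  shows "faces_around z \<subseteq> D_faces cs \<or> faces_around z \<inter> D_faces cs = {}"
proof -
  obtain a b where zab: "z = (a,b)" by (cases z)
  have "\<not> cycle_edge cs (a,b-1) (a,b)" using z zab cedge_mem by blast
  then have e1: "enclosed_face cs (a,b) = enclosed_face cs (a+1,b)" using G1[of a b] by simp
  have "\<not> cycle_edge cs (a,b) (a,b+1)" using z zab cedge_mem by blast
  then have e2: "enclosed_face cs (a,b+1) = enclosed_face cs (a+1,b+1)" using G1[of a "b+1"] by simp
  have "\<not> cycle_edge cs (a,b) (a+1,b)" using z zab cedge_mem by blast
  then have e3: "enclosed_face cs (a+1,b) = enclosed_face cs (a+1,b+1)" using G2[of "a+1" b] by simp
  show ?thesis unfolding zab faces_around_def D_faces_def using e1 e2 e3 by auto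
qed

lemma fin_faces: "finite (D_faces cs)"
proof -
  have ne: "set cs \<noteq> {}" using n3 by auto
  define mX where "mX = Min (fst ` set cs)"
  define MX where "MX = Max (fst ` set cs)"
  define mY where "mY = Min (snd ` set cs)"
  define MY where "MY = Max (snd ` set cs)"
  have bX: "v \<in> set cs \<Longrightarrow> mX \<le> fst v \<and> fst v \<le> MX" for v
    unfolding mX_def MX_def by auto
  have bY: "v \<in> set cs \<Longrightarrow> mY \<le> snd v \<and> snd v \<le> MY" for v
    unfolding mY_def MY_def by auto
  have "D_faces cs \<subseteq> {mX..MX} \<times> {mY..MY}"
  proof
    fix f assume f: "f \<in> D_faces cs"
    obtain i j where fij: "f = (i,j)" by (cases f)
    have enc: "enclosed_face cs (i,j)" using f fij unfolding D_faces_def by simp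
    then obtain a where a: "a \<ge> i" "(a,j) \<in> set cs" using enc_mem by blast
    have jb: "mY \<le> j \<and> j \<le> MY" using bY[OF a(2)] by simp
    have iM: "i \<le> MX" using bX[OF a(2)] a(1) by simp
    have im: "i \<ge> mX"
    proof (rule ccontr)
      assume "\<not> i \<ge> mX"
      hence lt: "i < mX" by simp
      have "enclosed_face cs (i,j) = enclosed_face cs (i, j + int k)" for k
      proof (induction k)
        case 0 then show ?case by simp
      next
        case (Suc k)
        have "(i, j + int k) \<notin> set cs" using bX lt by fastforce
        then have "\<not> cycle_edge cs (i-1, j + int k) (i, j + int k)" using cedge_mem by blast
        then have "enclosed_face cs (i, j + int k) = enclosed_face cs (i, j + int k + 1)"
          using G2[of i "j + int k"] by simp
        then show ?case using Suc by (simp add: algebra_simps)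
      qed
      from this[of "nat (MY - j + 1)"] enc have "enclosed_face cs (i, j + int (nat (MY - j + 1)))" by simp
      then obtain a' where "(a', j + int (nat (MY - j + 1))) \<in> set cs" using enc_mem by blast
      from bY[OF this] jb show False by simp
    qed
    show "f \<in> {mX..MX} \<times> {mY..MY}" using fij jb iM im by simp
  qed
  then show ?thesis using finite_subset by blast
qed

end

definition "oa \<sigma> z \<longleftrightarrow> \<sigma> (fst (odd_pair z)) = \<sigma> (snd (odd_pair z))"
definition "ea \<sigma> z \<longleftrightarrow> \<sigma> (fst (even_pair z)) = \<sigma> (snd (even_pair z))"
definition "PP cs = {\<sigma>. \<forall>f. f \<notin> D_faces cs \<longrightarrow> \<sigma> f}"
definition "OS cs \<xi> = {\<sigma>\<in>PP cs. \<forall>z\<in>\<xi>. oa \<sigma> z}"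
definition "ES cs \<kappa> = {\<sigma>\<in>PP cs. \<forall>z\<in>D_verts cs - \<kappa>. ea \<sigma> z}"
definition "W cs c \<sigma> \<xi> = (if (\<forall>z\<in>\<xi>. oa \<sigma> z) \<and> (\<forall>z\<in>D_verts cs - \<xi>. ea \<sigma> z)
   then (c - 1) ^ card {z\<in>\<xi>. ea \<sigma> z} else (0::real))"

lemma odd_pair_odd: "\<not> even_face (fst (odd_pair z))" "\<not> even_face (snd (odd_pair z))"
  and even_pair_even: "even_face (fst (even_pair z))" "even_face (snd (even_pair z))"
  unfolding odd_pair_def even_pair_def diag1_def diag2_def even_face_def by auto

lemma node_spin_of: "node_spin \<sigma> (node_of cs z f) = \<sigma> f"
  unfolding node_of_def by simp

lemma type_c_iff: "type_c_at \<sigma> z \<longleftrightarrow> oa \<sigma> z \<and> ea \<sigma> z"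
  unfolding type_c_at_def oa_def ea_def odd_pair_def even_pair_def by auto

lemma ice_iff: "ice_rule_at \<sigma> z \<longleftrightarrow> oa \<sigma> z \<or> ea \<sigma> z"
  unfolding ice_rule_at_def oa_def ea_def odd_pair_def even_pair_def by auto

lemma theta_eq: "theta cs \<sigma> = {z\<in>D_verts cs. \<not> oa \<sigma> z}"
  unfolding theta_def circ_ends_def oa_def by (simp add: node_spin_of)

lemma omega_eq: "omega cs \<sigma> = {z\<in>D_verts cs. \<not> ea \<sigma> z}"
  unfolding omega_def bullet_ends_def ea_def by (simp add: node_spin_of)

lemma fin_PP:
  assumes "finite (D_faces cs)"
  shows "finite (PP cs)"
proof -
  have "PP cs \<subseteq> (\<lambda>S f. f \<notin> D_faces cs \<or> f \<in> S) ` Pow (D_faces cs)"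
  proof
    fix \<sigma> assume s: "\<sigma> \<in> PP cs"
    have "\<sigma> = (\<lambda>f. f \<notin> D_faces cs \<or> f \<in> {g\<in>D_faces cs. \<sigma> g})" using s unfolding PP_def by auto
    then show "\<sigma> \<in> (\<lambda>S f. f \<notin> D_faces cs \<or> f \<in> S) ` Pow (D_faces cs)" by blast
  qed
  then show ?thesis using assms finite_subset by blast
qed

lemma fin_Dv:
  assumes "finite (D_faces cs)"
  shows "finite (D_verts cs)"
proof -
  have "D_verts cs \<subseteq> set cs \<union> D_faces cs"
    unfolding D_verts_def faces_around_def by auto
  then show ?thesis using assms finite_subset by blast
qed

lemma mx_PP: "s \<in> PP cs \<Longrightarrow> t \<in> PP cs \<Longrightarrow> mx s t \<in> PP cs"
  unfolding PP_def mx_def by auto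

lemma mx_OS: "s \<in> OS cs \<xi> \<Longrightarrow> t \<in> OS cs \<xi> \<Longrightarrow> mx s t \<in> OS cs \<xi>"
  unfolding OS_def using mx_PP by (auto simp: oa_def mx_def)

lemma mx_ES: "s \<in> ES cs \<kappa> \<Longrightarrow> t \<in> ES cs \<kappa> \<Longrightarrow> mx s t \<in> ES cs \<kappa>"
  unfolding ES_def using mx_PP by (auto simp: ea_def mx_def)

lemma W_eq:
  fixes c :: real
  assumes c: "c \<ge> 2" and fD: "finite (D_verts cs)" and xi: "\<xi> \<subseteq> D_verts cs"
  shows "c ^ N_c cs \<sigma> * xi_cond cs c \<sigma> \<xi> = W cs c \<sigma> \<xi>"
proof -
  define Fs where "Fs = {z\<in>D_verts cs. oa \<sigma> z \<and> ea \<sigma> z}"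
  define p where "p = (c - 1) / c"
  have Fs: "D_verts cs - theta cs \<sigma> - omega cs \<sigma> = Fs" unfolding Fs_def theta_eq omega_eq by auto
  have Nc: "N_c cs \<sigma> = card Fs" unfolding N_c_def Fs_def type_c_iff ..
  have cond: "(\<xi> \<subseteq> D_verts cs \<and> \<xi> \<inter> theta cs \<sigma> = {} \<and> omega cs \<sigma> \<subseteq> \<xi>) \<longleftrightarrow>
      ((\<forall>z\<in>\<xi>. oa \<sigma> z) \<and> (\<forall>z\<in>D_verts cs - \<xi>. ea \<sigma> z))"
    using xi unfolding theta_eq omega_eq by auto
  show ?thesis
  proof (cases "(\<forall>z\<in>\<xi>. oa \<sigma> z) \<and> (\<forall>z\<in>D_verts cs - \<xi>. ea \<sigma> z)")
    case False
    have "xi_cond cs c \<sigma> \<xi> = 0" unfolding xi_cond_def Let_def using cond False by (simp only: if_False)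
    moreover have "W cs c \<sigma> \<xi> = 0" unfolding W_def by (rule if_not_P[OF False])
    ultimately show ?thesis by simp
  next
    case True
    have fF: "finite Fs" using fD unfolding Fs_def by simp
    have cF: "card Fs = card (\<xi> \<inter> Fs) + card (Fs - \<xi>)"
      using fF by (metis Int_commute card_Int_Diff)
    have xF: "\<xi> \<inter> Fs = {z\<in>\<xi>. ea \<sigma> z}" using True xi unfolding Fs_def by auto
    have cp: "c * p = c - 1" "c * (1 - p) = 1" using c unfolding p_def by (auto simp: field_simps)
    have xc: "xi_cond cs c \<sigma> \<xi> = p ^ card (\<xi> \<inter> Fs) * (1 - p) ^ card (Fs - \<xi>)"
      unfolding xi_cond_def Let_def p_def using cond True Fs by simp
    have "c ^ N_c cs \<sigma> * xi_cond cs c \<sigma> \<xi> = c ^ (card (\<xi> \<inter> Fs) + card (Fs - \<xi>)) * (p ^ card (\<xi> \<inter> Fs) * (1 - p) ^ card (Fs - \<xi>))"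
      unfolding xc Nc cF[symmetric] ..
    also have "\<dots> = (c * p) ^ card (\<xi> \<inter> Fs) * (c * (1 - p)) ^ card (Fs - \<xi>)"
      by (simp add: power_add power_mult_distrib)
    also have "\<dots> = (c - 1) ^ card {z\<in>\<xi>. ea \<sigma> z}" unfolding cp xF by simp
    finally show ?thesis unfolding W_def using True by simp
  qed
qed

lemma W_zero:
  assumes sc: "simple_cycle cs" and s: "\<sigma> \<in> PP cs" and ns: "\<sigma> \<notin> spin_configs cs"
  shows "W cs c \<sigma> \<xi> = 0"
proof (rule ccontr)
  assume "W cs c \<sigma> \<xi> \<noteq> 0"
  then have h: "\<forall>z\<in>\<xi>. oa \<sigma> z" "\<forall>z\<in>D_verts cs - \<xi>. ea \<sigma> z" unfolding W_def by (auto split: if_splits)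
  have "ice_rule_at \<sigma> z" for z
  proof (cases "z \<in> D_verts cs")
    case True
    then show ?thesis using h unfolding ice_iff by (cases "z \<in> \<xi>") auto
  next
    case False
    then have "z \<notin> set cs" "\<not> faces_around z \<subseteq> D_faces cs" unfolding D_verts_def by auto
    then have "faces_around z \<inter> D_faces cs = {}" using vert_out[OF sc] by blast
    then have "\<forall>f\<in>faces_around z. \<sigma> f" using s unfolding PP_def by auto
    then show ?thesis unfolding ice_rule_at_def diag1_def diag2_def faces_around_def by auto
  qed
  then have "\<sigma> \<in> spin_configs cs" using s unfolding spin_configs_def PP_def by auto
  then show False using ns by simp
qed


definition "Zs cs c = (\<Sum>\<tau>\<in>spin_configs cs. spin_weight cs c \<tau>)"
definition "Phi cs c \<xi> = (\<Sum>\<sigma>\<in>PP cs. W cs c \<sigma> \<xi>)"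
definition "Psi cs c \<xi> = (\<Sum>\<kappa>\<in>Pow \<xi>. (c - 2) ^ card (\<xi> - \<kappa>) * real (card (ES cs \<kappa>)))"

lemma sum_ind_card:
  assumes "finite A" "S \<subseteq> A"
  shows "(\<Sum>x\<in>A. if x \<in> S then (1::real) else 0) = real (card S)"
proof -
  have "(\<Sum>x\<in>A. if x \<in> S then (1::real) else 0) = (\<Sum>x\<in>{x\<in>A. x \<in> S}. 1)"
    by (rule sum.inter_filter[symmetric]) (use assms in simp)
  also have "{x\<in>A. x \<in> S} = S" using assms by auto
  finally show ?thesis by simp
qed

context
  fixes cs :: "vertex list" and c :: real
  assumes sc: "simple_cycle cs" and c2: "c \<ge> 2"
begin

lemma fF: "finite (D_faces cs)" by (rule fin_faces[OF sc])
lemma fD: "finite (D_verts cs)" by (rule fin_Dv[OF fF])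
lemma fP: "finite (PP cs)" by (rule fin_PP[OF fF])

lemma SC_PP: "spin_configs cs \<subseteq> PP cs" unfolding spin_configs_def PP_def by auto
lemma fSC: "finite (spin_configs cs)" using fP SC_PP finite_subset by blast
lemma True_SC: "(\<lambda>_. True) \<in> spin_configs cs" unfolding spin_configs_def ice_rule_at_def by simp
lemma True_PP: "(\<lambda>_. True) \<in> PP cs" unfolding PP_def by simp

lemma Zpos: "Zs cs c > 0"
proof -
  have "0 < spin_weight cs c (\<lambda>_. True)" unfolding spin_weight_def using c2 by simp
  moreover have "\<forall>\<tau>\<in>spin_configs cs. 0 \<le> spin_weight cs c \<tau>" unfolding spin_weight_def using c2 by simp
  ultimately show ?thesis unfolding Zs_def using sum_pos2[OF fSC True_SC] by blast
qed

lemma FKIs_eq: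
  assumes xi: "\<xi> \<subseteq> D_verts cs"
  shows "FKIs cs c \<xi> = Phi cs c \<xi> / Zs cs c"
proof -
  have "FKIs cs c \<xi> = (\<Sum>\<sigma>\<in>spin_configs cs. W cs c \<sigma> \<xi> / Zs cs c)"
    unfolding FKIs_def
  proof (rule sum.cong[OF refl])
    fix \<sigma> assume s: "\<sigma> \<in> spin_configs cs"
    have "spin_prob cs c \<sigma> * xi_cond cs c \<sigma> \<xi> = (c ^ N_c cs \<sigma> * xi_cond cs c \<sigma> \<xi>) / Zs cs c"
      unfolding spin_prob_def spin_weight_def Zs_def using s by simp
    also have "\<dots> = W cs c \<sigma> \<xi> / Zs cs c" using W_eq[OF c2 fD xi] by simp
    finally show "spin_prob cs c \<sigma> * xi_cond cs c \<sigma> \<xi> = W cs c \<sigma> \<xi> / Zs cs c" .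
  qed
  also have "\<dots> = (\<Sum>\<sigma>\<in>spin_configs cs. W cs c \<sigma> \<xi>) / Zs cs c" by (simp add: sum_divide_distrib)
  also have "(\<Sum>\<sigma>\<in>spin_configs cs. W cs c \<sigma> \<xi>) = Phi cs c \<xi>"
    unfolding Phi_def by (rule sum.mono_neutral_left[OF fP SC_PP]) (use W_zero[OF sc] in blast)
  finally show ?thesis .
qed

lemma W_expand:
  assumes xi: "\<xi> \<subseteq> D_verts cs" and s: "\<sigma> \<in> PP cs"
  shows "W cs c \<sigma> \<xi> = (\<Sum>\<kappa>\<in>Pow \<xi>. (c - 2) ^ card (\<xi> - \<kappa>) * (if \<sigma> \<in> OS cs \<xi> \<inter> ES cs \<kappa> then 1 else 0))"
proof (cases "(\<forall>z\<in>\<xi>. oa \<sigma> z) \<and> (\<forall>z\<in>D_verts cs - \<xi>. ea \<sigma> z)")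
  case False
  have "W cs c \<sigma> \<xi> = 0" unfolding W_def by (rule if_not_P[OF False])
  moreover have nm: "\<sigma> \<notin> OS cs \<xi> \<inter> ES cs \<kappa>" if "\<kappa> \<in> Pow \<xi>" for \<kappa>
    using False that unfolding OS_def ES_def by auto
  moreover have "(\<Sum>\<kappa>\<in>Pow \<xi>. (c - 2) ^ card (\<xi> - \<kappa>) * (if \<sigma> \<in> OS cs \<xi> \<inter> ES cs \<kappa> then 1 else 0)) = 0"
  proof (rule sum.neutral, intro ballI)
    fix \<kappa> assume "\<kappa> \<in> Pow \<xi>"
    then show "(c - 2) ^ card (\<xi> - \<kappa>) * (if \<sigma> \<in> OS cs \<xi> \<inter> ES cs \<kappa> then 1 else 0) = 0"
      using nm[OF \<open>\<kappa> \<in> Pow \<xi>\<close>] by (simp only: if_False mult_zero_right)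
  qed
  ultimately show ?thesis by simp
next
  case True
  define A where "A = {z\<in>\<xi>. ea \<sigma> z}"
  have fx: "finite \<xi>" using xi fD finite_subset by blast
  have Ax: "A \<subseteq> \<xi>" unfolding A_def by auto
  have fA: "finite A" using Ax fx finite_subset by blast
  have mem: "\<sigma> \<in> OS cs \<xi> \<inter> ES cs \<kappa> \<longleftrightarrow> \<xi> - \<kappa> \<subseteq> A" if "\<kappa> \<subseteq> \<xi>" for \<kappa>
    using True s that xi unfolding OS_def ES_def A_def by auto
  have "(\<Sum>\<kappa>\<in>Pow \<xi>. (c - 2) ^ card (\<xi> - \<kappa>) * (if \<sigma> \<in> OS cs \<xi> \<inter> ES cs \<kappa> then 1 else 0))
      = (\<Sum>\<kappa>\<in>Pow \<xi>. (if \<xi> - \<kappa> \<subseteq> A then (c - 2) ^ card (\<xi> - \<kappa>) else 0))"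
    by (rule sum.cong[OF refl]) (use mem in auto)
  also have "\<dots> = (\<Sum>\<eta>\<in>Pow \<xi>. (if \<eta> \<subseteq> A then (c - 2) ^ card \<eta> else 0))"
    by (rule sum.reindex_bij_witness[where i = "\<lambda>\<eta>. \<xi> - \<eta>" and j = "\<lambda>\<eta>. \<xi> - \<eta>"]) auto
  also have "\<dots> = (\<Sum>\<eta>\<in>{\<eta>\<in>Pow \<xi>. \<eta> \<subseteq> A}. (c - 2) ^ card \<eta>)"
    by (rule sum.inter_filter[symmetric]) (use fx in simp)
  also have "{\<eta>\<in>Pow \<xi>. \<eta> \<subseteq> A} = Pow A" using Ax by auto
  also have "(\<Sum>\<eta>\<in>Pow A. (c - 2) ^ card \<eta>) = (\<Sum>\<eta>\<in>Pow A. (c - 2) ^ card \<eta> * 1 ^ card (A - \<eta>))" by simp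
  also have "\<dots> = (c - 2 + 1) ^ card A" by (rule binom_Pow[OF fA])
  also have "\<dots> = W cs c \<sigma> \<xi>" unfolding W_def A_def using True by simp
  finally show ?thesis ..
qed

lemma Phi_eq:
  assumes xi: "\<xi> \<subseteq> D_verts cs"
  shows "Phi cs c \<xi> = (\<Sum>\<kappa>\<in>Pow \<xi>. (c - 2) ^ card (\<xi> - \<kappa>) * real (card (OS cs \<xi> \<inter> ES cs \<kappa>)))"
proof -
  have "Phi cs c \<xi> = (\<Sum>\<sigma>\<in>PP cs. \<Sum>\<kappa>\<in>Pow \<xi>. (c - 2) ^ card (\<xi> - \<kappa>) * (if \<sigma> \<in> OS cs \<xi> \<inter> ES cs \<kappa> then 1 else 0))"
    unfolding Phi_def by (rule sum.cong[OF refl]) (rule W_expand[OF xi])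
  also have "\<dots> = (\<Sum>\<kappa>\<in>Pow \<xi>. \<Sum>\<sigma>\<in>PP cs. (c - 2) ^ card (\<xi> - \<kappa>) * (if \<sigma> \<in> OS cs \<xi> \<inter> ES cs \<kappa> then 1 else 0))"
    by (rule sum.swap)
  also have "\<dots> = (\<Sum>\<kappa>\<in>Pow \<xi>. (c - 2) ^ card (\<xi> - \<kappa>) * real (card (OS cs \<xi> \<inter> ES cs \<kappa>)))"
  proof (rule sum.cong[OF refl])
    fix \<kappa> assume "\<kappa> \<in> Pow \<xi>"
    have sub: "OS cs \<xi> \<inter> ES cs \<kappa> \<subseteq> PP cs" unfolding OS_def by auto
    show "(\<Sum>\<sigma>\<in>PP cs. (c - 2) ^ card (\<xi> - \<kappa>) * (if \<sigma> \<in> OS cs \<xi> \<inter> ES cs \<kappa> then 1 else 0))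
        = (c - 2) ^ card (\<xi> - \<kappa>) * real (card (OS cs \<xi> \<inter> ES cs \<kappa>))"
      by (simp only: sum_distrib_left[symmetric] sum_ind_card[OF fP sub])
  qed
  finally show ?thesis .
qed

end

context
  fixes cs :: "vertex list" and c :: real
  assumes sc: "simple_cycle cs" and c2: "c \<ge> 2"
begin

lemma OS_PP: "OS cs \<xi> \<subseteq> PP cs" unfolding OS_def by auto
lemma ES_PP: "ES cs \<kappa> \<subseteq> PP cs" unfolding ES_def by auto
lemma fOS: "finite (OS cs \<xi>)" using fP[OF sc c2] OS_PP finite_subset by blast
lemma fES: "finite (ES cs \<kappa>)" using fP[OF sc c2] ES_PP finite_subset by blast

lemma split_card: "card (OS cs \<xi>) * card (ES cs \<kappa>) = card (OS cs \<xi> \<inter> ES cs \<kappa>) * card (PP cs)"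
proof -
  have "(\<lambda>p. mx (fst p) (snd p)) ` (OS cs \<xi> \<times> ES cs \<kappa>) = PP cs"
  proof
    show "(\<lambda>p. mx (fst p) (snd p)) ` (OS cs \<xi> \<times> ES cs \<kappa>) \<subseteq> PP cs"
    proof (rule image_subsetI)
      fix p assume p: "p \<in> OS cs \<xi> \<times> ES cs \<kappa>"
      have "fst p \<in> PP cs" "snd p \<in> PP cs" using p OS_PP ES_PP by (auto simp: mem_Times_iff)
      then show "mx (fst p) (snd p) \<in> PP cs" by (rule mx_PP)
    qed
    show "PP cs \<subseteq> (\<lambda>p. mx (fst p) (snd p)) ` (OS cs \<xi> \<times> ES cs \<kappa>)"
    proof
      fix \<sigma> assume s: "\<sigma> \<in> PP cs"
      define \<rho> where "\<rho> = (\<lambda>f. if even_face f then \<sigma> f else True)"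
      define \<tau> where "\<tau> = (\<lambda>f. if even_face f then True else \<sigma> f)"
      have "\<rho> \<in> OS cs \<xi>" using s odd_pair_odd unfolding OS_def PP_def \<rho>_def oa_def by simp
      moreover have "\<tau> \<in> ES cs \<kappa>" using s even_pair_even unfolding ES_def PP_def \<tau>_def ea_def by simp
      moreover have "\<sigma> = mx \<rho> \<tau>" unfolding mx_def \<rho>_def \<tau>_def by auto
      ultimately show "\<sigma> \<in> (\<lambda>p. mx (fst p) (snd p)) ` (OS cs \<xi> \<times> ES cs \<kappa>)"
        by (intro image_eqI[of _ _ "(\<rho>, \<tau>)"]) simp_all
    qed
  qed
  moreover have "card (OS cs \<xi>) * card (ES cs \<kappa>) = card (OS cs \<xi> \<inter> ES cs \<kappa>) * card ((\<lambda>p. mx (fst p) (snd p)) ` (OS cs \<xi> \<times> ES cs \<kappa>))"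
    by (rule grp_card[OF fOS fES mx_OS mx_ES])
  ultimately show ?thesis by simp
qed

lemma OS_lsm: "card (OS cs \<xi>) * card (OS cs \<xi>') \<le> card (OS cs (\<xi> \<union> \<xi>')) * card (OS cs (\<xi> \<inter> \<xi>'))"
proof (rule grp_lsm[OF fOS fOS mx_OS mx_OS _ _ fOS])
  show "OS cs (\<xi> \<union> \<xi>') = OS cs \<xi> \<inter> OS cs \<xi>'" unfolding OS_def by auto
  show "(\<lambda>p. mx (fst p) (snd p)) ` (OS cs \<xi> \<times> OS cs \<xi>') \<subseteq> OS cs (\<xi> \<inter> \<xi>')"
    using mx_PP unfolding OS_def by (auto simp: oa_def mx_def)
qed

lemma ES_lsm: "card (ES cs \<kappa>) * card (ES cs \<kappa>') \<le> card (ES cs (\<kappa> \<inter> \<kappa>')) * card (ES cs (\<kappa> \<union> \<kappa>'))"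
proof (rule grp_lsm[OF fES fES mx_ES mx_ES _ _ fES])
  show "ES cs (\<kappa> \<inter> \<kappa>') = ES cs \<kappa> \<inter> ES cs \<kappa>'" unfolding ES_def by auto
  show "(\<lambda>p. mx (fst p) (snd p)) ` (ES cs \<kappa> \<times> ES cs \<kappa>') \<subseteq> ES cs (\<kappa> \<union> \<kappa>')"
    using mx_PP unfolding ES_def by (auto simp: ea_def mx_def)
qed

definition "al \<xi> \<kappa> = (if \<kappa> \<subseteq> \<xi> then (c - 2) ^ card (\<xi> - \<kappa>) * real (card (ES cs \<kappa>)) else 0)"

lemma al_nn: "0 \<le> al \<xi> \<kappa>" unfolding al_def using c2 by simp

lemma al_sum: "\<xi> \<subseteq> D_verts cs \<Longrightarrow> (\<Sum>\<kappa>\<in>Pow (D_verts cs). al \<xi> \<kappa>) = Psi cs c \<xi>"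
proof -
  assume xi: "\<xi> \<subseteq> D_verts cs"
  have "(\<Sum>\<kappa>\<in>Pow (D_verts cs). al \<xi> \<kappa>) = (\<Sum>\<kappa>\<in>{\<kappa>\<in>Pow (D_verts cs). \<kappa> \<subseteq> \<xi>}. (c - 2) ^ card (\<xi> - \<kappa>) * real (card (ES cs \<kappa>)))"
    unfolding al_def by (rule sum.inter_filter[symmetric]) (use fD[OF sc c2] in simp)
  also have "{\<kappa>\<in>Pow (D_verts cs). \<kappa> \<subseteq> \<xi>} = Pow \<xi>" using xi by auto
  finally show ?thesis unfolding Psi_def .
qed

lemma card_exp:
  assumes "finite \<xi>" "finite \<xi>'" "\<kappa> \<subseteq> \<xi>" "\<kappa>' \<subseteq> \<xi>'"
  shows "card (\<xi> - \<kappa>) + card (\<xi>' - \<kappa>') = card ((\<xi> \<union> \<xi>') - (\<kappa> \<union> \<kappa>')) + card ((\<xi> \<inter> \<xi>') - (\<kappa> \<inter> \<kappa>'))"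
proof -
  have f: "finite \<kappa>" "finite \<kappa>'" using assms finite_subset by auto
  have s: "\<kappa> \<union> \<kappa>' \<subseteq> \<xi> \<union> \<xi>'" "\<kappa> \<inter> \<kappa>' \<subseteq> \<xi> \<inter> \<xi>'" using assms by auto
  have 1: "card (\<xi> - \<kappa>) = card \<xi> - card \<kappa>" "card (\<xi>' - \<kappa>') = card \<xi>' - card \<kappa>'"
    using assms f by (auto intro: card_Diff_subset)
  have 2: "card ((\<xi> \<union> \<xi>') - (\<kappa> \<union> \<kappa>')) = card (\<xi> \<union> \<xi>') - card (\<kappa> \<union> \<kappa>')"
    "card ((\<xi> \<inter> \<xi>') - (\<kappa> \<inter> \<kappa>')) = card (\<xi> \<inter> \<xi>') - card (\<kappa> \<inter> \<kappa>')"
    using s assms f by (auto intro!: card_Diff_subset)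
  have 3: "card \<xi> + card \<xi>' = card (\<xi> \<union> \<xi>') + card (\<xi> \<inter> \<xi>')" using assms card_Un_Int by blast
  have 4: "card \<kappa> + card \<kappa>' = card (\<kappa> \<union> \<kappa>') + card (\<kappa> \<inter> \<kappa>')" using f card_Un_Int by blast
  have 5: "card \<kappa> \<le> card \<xi>" "card \<kappa>' \<le> card \<xi>'" using assms card_mono by auto
  have 6: "card (\<kappa> \<union> \<kappa>') \<le> card (\<xi> \<union> \<xi>')" "card (\<kappa> \<inter> \<kappa>') \<le> card (\<xi> \<inter> \<xi>')"
    using s assms card_mono by (auto intro: card_mono)
  show ?thesis unfolding 1 2 using 3 4 5 6 by linarith
qed

lemma Psi_lsm:
  assumes xi: "\<xi> \<subseteq> D_verts cs" and xi': "\<xi>' \<subseteq> D_verts cs"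
  shows "Psi cs c \<xi> * Psi cs c \<xi>' \<le> Psi cs c (\<xi> \<union> \<xi>') * Psi cs c (\<xi> \<inter> \<xi>')"
proof -
  have "(\<Sum>\<kappa>\<in>Pow (D_verts cs). al \<xi> \<kappa>) * (\<Sum>\<kappa>\<in>Pow (D_verts cs). al \<xi>' \<kappa>)
     \<le> (\<Sum>\<kappa>\<in>Pow (D_verts cs). al (\<xi> \<union> \<xi>') \<kappa>) * (\<Sum>\<kappa>\<in>Pow (D_verts cs). al (\<xi> \<inter> \<xi>') \<kappa>)"
  proof (rule AD[OF fD[OF sc c2]])
    fix A B assume A: "A \<subseteq> D_verts cs" and B: "B \<subseteq> D_verts cs"
    show "al \<xi> A * al \<xi>' B \<le> al (\<xi> \<union> \<xi>') (A \<union> B) * al (\<xi> \<inter> \<xi>') (A \<inter> B)"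
    proof (cases "A \<subseteq> \<xi> \<and> B \<subseteq> \<xi>'")
      case True
      have fx: "finite \<xi>" "finite \<xi>'" using xi xi' fD[OF sc c2] finite_subset by auto
      have e: "card (\<xi> - A) + card (\<xi>' - B) = card ((\<xi> \<union> \<xi>') - (A \<union> B)) + card ((\<xi> \<inter> \<xi>') - (A \<inter> B))"
        using card_exp[OF fx] True by blast
      have es: "real (card (ES cs A)) * real (card (ES cs B)) \<le> real (card (ES cs (A \<union> B))) * real (card (ES cs (A \<inter> B)))"
        using ES_lsm[of A B] by (simp add: mult.commute of_nat_mult[symmetric] del: of_nat_mult)
      have t0: "0 \<le> (c - 2) ^ (card ((\<xi> \<union> \<xi>') - (A \<union> B)) + card ((\<xi> \<inter> \<xi>') - (A \<inter> B)))" using c2 by simp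
      have "al \<xi> A * al \<xi>' B = (c - 2) ^ (card (\<xi> - A) + card (\<xi>' - B)) * (real (card (ES cs A)) * real (card (ES cs B)))"
        unfolding al_def using True by (simp add: power_add)
      also have "\<dots> \<le> (c - 2) ^ (card ((\<xi> \<union> \<xi>') - (A \<union> B)) + card ((\<xi> \<inter> \<xi>') - (A \<inter> B))) * (real (card (ES cs (A \<union> B))) * real (card (ES cs (A \<inter> B))))"
        unfolding e by (rule mult_left_mono[OF es t0])
      also have "\<dots> = al (\<xi> \<union> \<xi>') (A \<union> B) * al (\<xi> \<inter> \<xi>') (A \<inter> B)"
        unfolding al_def using True by (auto simp: power_add)
      finally show ?thesis .
    next
      case False
      then have "al \<xi> A * al \<xi>' B = 0" unfolding al_def by auto
      moreover have "0 \<le> al (\<xi> \<union> \<xi>') (A \<union> B) * al (\<xi> \<inter> \<xi>') (A \<inter> B)"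
        using al_nn by (simp add: zero_le_mult_iff)
      ultimately show ?thesis by linarith
    qed
  qed (rule al_nn)+
  moreover have "\<xi> \<union> \<xi>' \<subseteq> D_verts cs" "\<xi> \<inter> \<xi>' \<subseteq> D_verts cs" using xi xi' by auto
  ultimately show ?thesis using al_sum xi xi' by metis
qed

end

context
  fixes cs :: "vertex list" and c :: real
  assumes sc: "simple_cycle cs" and c2: "c \<ge> 2"
begin

lemma PP_pos: "card (PP cs) > 0"
proof -
  have "PP cs \<noteq> {}" using True_PP[OF sc c2] by blast
  thus ?thesis using fP[OF sc c2] by (simp add: card_gt_0_iff)
qed

lemma Psi_nn: "0 \<le> Psi cs c \<xi>"
  unfolding Psi_def using c2 by (intro sum_nonneg) simp

lemma Phi_prod:
  assumes xi: "\<xi> \<subseteq> D_verts cs"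
  shows "Phi cs c \<xi> * real (card (PP cs)) = real (card (OS cs \<xi>)) * Psi cs c \<xi>"
proof -
  have "Phi cs c \<xi> * real (card (PP cs)) = (\<Sum>\<kappa>\<in>Pow \<xi>. (c - 2) ^ card (\<xi> - \<kappa>) * (real (card (OS cs \<xi> \<inter> ES cs \<kappa>)) * real (card (PP cs))))"
    unfolding Phi_eq[OF sc c2 xi] by (simp add: sum_distrib_right mult.assoc)
  also have "\<dots> = (\<Sum>\<kappa>\<in>Pow \<xi>. real (card (OS cs \<xi>)) * ((c - 2) ^ card (\<xi> - \<kappa>) * real (card (ES cs \<kappa>))))"
  proof (rule sum.cong[OF refl])
    fix \<kappa>
    have "real (card (OS cs \<xi> \<inter> ES cs \<kappa>)) * real (card (PP cs)) = real (card (OS cs \<xi>)) * real (card (ES cs \<kappa>))"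
      using split_card[OF sc c2, of \<xi> \<kappa>] by (metis of_nat_mult)
    then show "(c - 2) ^ card (\<xi> - \<kappa>) * (real (card (OS cs \<xi> \<inter> ES cs \<kappa>)) * real (card (PP cs)))
        = real (card (OS cs \<xi>)) * ((c - 2) ^ card (\<xi> - \<kappa>) * real (card (ES cs \<kappa>)))" by simp
  qed
  also have "\<dots> = real (card (OS cs \<xi>)) * Psi cs c \<xi>" unfolding Psi_def by (simp add: sum_distrib_left)
  finally show ?thesis .
qed

lemma FKIs_form:
  assumes xi: "\<xi> \<subseteq> D_verts cs"
  shows "FKIs cs c \<xi> = real (card (OS cs \<xi>)) * Psi cs c \<xi> / (real (card (PP cs)) * Zs cs c)"
proof -
  have P: "real (card (PP cs)) > 0" using PP_pos by simp
  have "Phi cs c \<xi> = real (card (OS cs \<xi>)) * Psi cs c \<xi> / real (card (PP cs))"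
    using Phi_prod[OF xi] P by (simp add: field_simps)
  then show ?thesis unfolding FKIs_eq[OF sc c2 xi] by simp
qed

lemma FKIs_nn: "\<xi> \<subseteq> D_verts cs \<Longrightarrow> 0 \<le> FKIs cs c \<xi>"
  unfolding FKIs_form using Psi_nn Zpos[OF sc c2] PP_pos by simp

lemma xi_total:
  assumes s: "\<sigma> \<in> spin_configs cs"
  shows "(\<Sum>\<xi>\<in>Pow (D_verts cs). xi_cond cs c \<sigma> \<xi>) = 1"
proof -
  define th where "th = theta cs \<sigma>"
  define om where "om = omega cs \<sigma>"
  define Fs where "Fs = D_verts cs - th - om"
  define p where "p = (c - 1) / c"
  have ice: "\<forall>z. ice_rule_at \<sigma> z" using s unfolding spin_configs_def by simp
  have thom: "th \<inter> om = {}" using ice unfolding th_def om_def theta_eq omega_eq ice_iff by auto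
  have thD: "th \<subseteq> D_verts cs" "om \<subseteq> D_verts cs" unfolding th_def om_def theta_def omega_def by auto
  have fFs: "finite Fs" unfolding Fs_def using fD[OF sc c2] by simp
  let ?S = "{\<xi>\<in>Pow (D_verts cs). \<xi> \<inter> th = {} \<and> om \<subseteq> \<xi>}"
  have "(\<Sum>\<xi>\<in>Pow (D_verts cs). xi_cond cs c \<sigma> \<xi>)
      = (\<Sum>\<xi>\<in>Pow (D_verts cs). if \<xi> \<inter> th = {} \<and> om \<subseteq> \<xi> then p ^ card (\<xi> \<inter> Fs) * (1 - p) ^ card (Fs - \<xi>) else 0)"
    by (rule sum.cong[OF refl]) (simp add: xi_cond_def Let_def th_def om_def Fs_def p_def)
  also have "\<dots> = (\<Sum>\<xi>\<in>?S. p ^ card (\<xi> \<inter> Fs) * (1 - p) ^ card (Fs - \<xi>))"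
    by (rule sum.inter_filter[symmetric]) (use fD[OF sc c2] in simp)
  also have "\<dots> = (\<Sum>B\<in>Pow Fs. p ^ card B * (1 - p) ^ card (Fs - B))"
  proof (rule sum.reindex_bij_witness[where j = "\<lambda>\<xi>. \<xi> \<inter> Fs" and i = "\<lambda>B. om \<union> B"])
    show "\<And>a. a \<in> ?S \<Longrightarrow> om \<union> (a \<inter> Fs) = a" unfolding Fs_def by auto
    show "\<And>a. a \<in> ?S \<Longrightarrow> a \<inter> Fs \<in> Pow Fs" by auto
    show "\<And>b. b \<in> Pow Fs \<Longrightarrow> (om \<union> b) \<inter> Fs = b" unfolding Fs_def by auto
    show "\<And>b. b \<in> Pow Fs \<Longrightarrow> om \<union> b \<in> ?S" using thD thom unfolding Fs_def by auto
    show "\<And>a. a \<in> ?S \<Longrightarrow> p ^ card (a \<inter> Fs) * (1 - p) ^ card (Fs - (a \<inter> Fs)) = p ^ card (a \<inter> Fs) * (1 - p) ^ card (Fs - a)"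
      by (simp add: Diff_Int)
  qed
  also have "\<dots> = (p + (1 - p)) ^ card Fs" by (rule binom_Pow[OF fFs])
  finally show ?thesis by simp
qed

lemma total: "(\<Sum>\<xi>\<in>Pow (D_verts cs). FKIs cs c \<xi>) = 1"
proof -
  have "(\<Sum>\<xi>\<in>Pow (D_verts cs). FKIs cs c \<xi>) = (\<Sum>\<sigma>\<in>spin_configs cs. \<Sum>\<xi>\<in>Pow (D_verts cs). spin_prob cs c \<sigma> * xi_cond cs c \<sigma> \<xi>)"
    unfolding FKIs_def by (rule sum.swap)
  also have "\<dots> = (\<Sum>\<sigma>\<in>spin_configs cs. spin_prob cs c \<sigma>)"
    by (rule sum.cong[OF refl]) (simp add: sum_distrib_left[symmetric] xi_total)
  also have "\<dots> = (\<Sum>\<sigma>\<in>spin_configs cs. spin_weight cs c \<sigma> / Zs cs c)"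
    by (rule sum.cong[OF refl]) (simp add: spin_prob_def Zs_def)
  also have "\<dots> = 1" using Zpos[OF sc c2] by (simp add: sum_divide_distrib[symmetric] Zs_def)
  finally show ?thesis .
qed

lemma fkg: "fkg_lattice (D_verts cs) (FKIs cs c)"
  unfolding fkg_lattice_def
proof (intro allI impI)
  fix \<xi> \<xi>' assume xi: "\<xi> \<subseteq> D_verts cs" and xi': "\<xi>' \<subseteq> D_verts cs"
  have u: "\<xi> \<union> \<xi>' \<subseteq> D_verts cs" "\<xi> \<inter> \<xi>' \<subseteq> D_verts cs" using xi xi' by auto
  define K where "K = real (card (PP cs)) * Zs cs c"
  have K: "K > 0" unfolding K_def using PP_pos Zpos[OF sc c2] by simp
  let ?o = "\<lambda>x. real (card (OS cs x))"
  let ?p = "\<lambda>x. Psi cs c x"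
  have o: "?o \<xi> * ?o \<xi>' \<le> ?o (\<xi> \<union> \<xi>') * ?o (\<xi> \<inter> \<xi>')"
    using OS_lsm[OF sc c2, of \<xi> \<xi>'] by (metis of_nat_mono of_nat_mult)
  have ps: "?p \<xi> * ?p \<xi>' \<le> ?p (\<xi> \<union> \<xi>') * ?p (\<xi> \<inter> \<xi>')" by (rule Psi_lsm[OF sc c2 xi xi'])
  have "(?o \<xi> * ?o \<xi>') * (?p \<xi> * ?p \<xi>') \<le> (?o (\<xi> \<union> \<xi>') * ?o (\<xi> \<inter> \<xi>')) * (?p (\<xi> \<union> \<xi>') * ?p (\<xi> \<inter> \<xi>'))"
    by (rule mult_mono[OF o ps]) (use Psi_nn in auto)
  then have "(?o \<xi> * ?p \<xi> / K) * (?o \<xi>' * ?p \<xi>' / K) \<le> (?o (\<xi> \<union> \<xi>') * ?p (\<xi> \<union> \<xi>') / K) * (?o (\<xi> \<inter> \<xi>') * ?p (\<xi> \<inter> \<xi>') / K)"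
    using K by (simp add: field_simps)
  then show "FKIs cs c \<xi> * FKIs cs c \<xi>' \<le> FKIs cs c (\<xi> \<union> \<xi>') * FKIs cs c (\<xi> \<inter> \<xi>')"
    unfolding FKIs_form[OF xi] FKIs_form[OF xi'] FKIs_form[OF u(1)] FKIs_form[OF u(2)] K_def .
qed

end

theorem proposition7p4:
  fixes c :: real and cs :: "vertex list"
  assumes "c \<ge> 2" and "simple_cycle cs"
  shows "fkg_lattice (D_verts cs) (FKIs cs c) \<and> positively_associated (D_verts cs) (FKIs cs c)"
proof
  show f: "fkg_lattice (D_verts cs) (FKIs cs c)" by (rule fkg[OF assms(2,1)])
  show "positively_associated (D_verts cs) (FKIs cs c)"
    by (rule fkg_pos_assoc[OF fD[OF assms(2,1)] FKIs_nn[OF assms(2,1)] total[OF assms(2,1)] f])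
qed

end
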